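(* Let $S$ be an idempotent semiring and define the binary relation $\sigma$ on $S$ by: $a\,\sigma\, b$ if and only if $aba=aba+a+aba$ and $bab=bab+b+bab$. Then the congruence on $S$ generated by $\sigma$ is the least distributive lattice congruence on $S$.
   Context: An idempotent semiring is an algebra $(S,+,\cdot)$ with two binary operations such that $(S,+)$ and $(S,\cdot)$ are bands (associative, with $x+x=x$ and $xx=x$), and both distributive laws $x(y+z)=xy+xz$ and $(x+y)z=xz+yz$ hold; addition is not assumed commutative. A distributive lattice congruence on $S$ is a congruence $\rho$ such that $S/\rho$ is a distributive lattice, i.e. $S/\rho$ satisfies $x+y\approx y+x$, $xy\approx yx$ and $x+xy\approx x$ (in addition to the idempotent semiring axioms). Every idempotent semiring has a least distributive lattice congruence. *)

theory Defs
  imports Main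
begin

text \<open>An idempotent semiring on the carrier type 'a, with operations add and mul
  (addition not assumed commutative).\<close>
definition idem_semiring :: "('a \<Rightarrow> 'a \<Rightarrow> 'a) \<Rightarrow> ('a \<Rightarrow> 'a \<Rightarrow> 'a) \<Rightarrow> bool" where
  "idem_semiring add mul \<longleftrightarrow>
     (\<forall>x y z. add (add x y) z = add x (add y z)) \<and> (\<forall>x. add x x = x) \<and>
     (\<forall>x y z. mul (mul x y) z = mul x (mul y z)) \<and> (\<forall>x. mul x x = x) \<and>
     (\<forall>x y z. mul x (add y z) = add (mul x y) (mul x z)) \<and>
     (\<forall>x y z. mul (add x y) z = add (mul x z) (mul y z))"

definition is_congruence :: "('a \<Rightarrow> 'a \<Rightarrow> 'a) \<Rightarrow> ('a \<Rightarrow> 'a \<Rightarrow> 'a) \<Rightarrow> 'a rel \<Rightarrow> bool" where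
  "is_congruence add mul \<rho> \<longleftrightarrow> equiv UNIV \<rho> \<and>
     (\<forall>a b c d. (a, b) \<in> \<rho> \<and> (c, d) \<in> \<rho> \<longrightarrow>
        (add a c, add b d) \<in> \<rho> \<and> (mul a c, mul b d) \<in> \<rho>)"

text \<open>A congruence whose quotient is a distributive lattice: the quotient satisfies
  x+y = y+x, xy = yx, x + xy = x (the idempotent semiring axioms are inherited).\<close>
definition dl_congruence :: "('a \<Rightarrow> 'a \<Rightarrow> 'a) \<Rightarrow> ('a \<Rightarrow> 'a \<Rightarrow> 'a) \<Rightarrow> 'a rel \<Rightarrow> bool" where
  "dl_congruence add mul \<rho> \<longleftrightarrow> is_congruence add mul \<rho> \<and>
     (\<forall>x y. (add x y, add y x) \<in> \<rho> \<and> (mul x y, mul y x) \<in> \<rho> \<and> (add x (mul x y), x) \<in> \<rho>)"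

definition cong_generated :: "('a \<Rightarrow> 'a \<Rightarrow> 'a) \<Rightarrow> ('a \<Rightarrow> 'a \<Rightarrow> 'a) \<Rightarrow> 'a rel \<Rightarrow> 'a rel" where
  "cong_generated add mul R = \<Inter>{\<rho>. is_congruence add mul \<rho> \<and> R \<subseteq> \<rho>}"

definition sigma_rel :: "('a \<Rightarrow> 'a \<Rightarrow> 'a) \<Rightarrow> ('a \<Rightarrow> 'a \<Rightarrow> 'a) \<Rightarrow> 'a rel" where
  "sigma_rel add mul = {(a, b).
     mul (mul a b) a = add (add (mul (mul a b) a) a) (mul (mul a b) a) \<and>
     mul (mul b a) b = add (add (mul (mul b a) b) b) (mul (mul b a) b)}"

end

theory Submission
  imports Defs
begin

lemma congR: "is_congruence add mul T \<Longrightarrow> (x,x) \<in> T"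
  unfolding is_congruence_def equiv_def by (auto dest: refl_onD)
lemma congS: "is_congruence add mul T \<Longrightarrow> (x,y) \<in> T \<Longrightarrow> (y,x) \<in> T"
  unfolding is_congruence_def equiv_def by (auto dest: symD)
lemma congT: "is_congruence add mul T \<Longrightarrow> (x,y) \<in> T \<Longrightarrow> (y,z) \<in> T \<Longrightarrow> (x,z) \<in> T"
  unfolding is_congruence_def equiv_def by (auto dest: transD)
lemma congA: "is_congruence add mul T \<Longrightarrow> (a,b) \<in> T \<Longrightarrow> (c,d) \<in> T \<Longrightarrow> (add a c, add b d) \<in> T"
  unfolding is_congruence_def by blast
lemma congM: "is_congruence add mul T \<Longrightarrow> (a,b) \<in> T \<Longrightarrow> (c,d) \<in> T \<Longrightarrow> (mul a c, mul b d) \<in> T"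
  unfolding is_congruence_def by blast

lemma cg_cong: "is_congruence add mul (cong_generated add mul R)"
proof -
  let ?F = "{\<rho>. is_congruence add mul \<rho> \<and> R \<subseteq> \<rho>}"
  have "equiv UNIV (\<Inter>?F)"
    unfolding equiv_def refl_on_def sym_def trans_def
    by (auto intro: congR dest: congS congT)
  moreover have "\<forall>a b c d. (a, b) \<in> \<Inter>?F \<and> (c, d) \<in> \<Inter>?F \<longrightarrow>
        (add a c, add b d) \<in> \<Inter>?F \<and> (mul a c, mul b d) \<in> \<Inter>?F"
    by (auto intro: congA congM)
  ultimately show ?thesis unfolding is_congruence_def cong_generated_def by blast
qed

lemma cg_sub: "R \<subseteq> cong_generated add mul R"
  unfolding cong_generated_def by blast

lemma cg_least: "is_congruence add mul \<rho> \<Longrightarrow> R \<subseteq> \<rho> \<Longrightarrow> cong_generated add mul R \<subseteq> \<rho>"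
  unfolding cong_generated_def by blast

locale isr =
  fixes add :: "'a \<Rightarrow> 'a \<Rightarrow> 'a" (infixl "\<oplus>" 65) and mul (infixl "\<odot>" 70)
  assumes ais: "idem_semiring add mul"
begin
lemma aa: "(x\<oplus>y)\<oplus>z = x\<oplus>(y\<oplus>z)" using ais unfolding idem_semiring_def by blast
lemma ai: "x\<oplus>x = x" using ais unfolding idem_semiring_def by blast
lemma ma: "(x\<odot>y)\<odot>z = x\<odot>(y\<odot>z)" using ais unfolding idem_semiring_def by blast
lemma mi: "x\<odot>x = x" using ais unfolding idem_semiring_def by blast
lemma dl: "x\<odot>(y\<oplus>z) = x\<odot>y \<oplus> x\<odot>z" using ais unfolding idem_semiring_def by blast
lemma dr: "(x\<oplus>y)\<odot>z = x\<odot>z \<oplus> y\<odot>z" using ais unfolding idem_semiring_def by blast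
lemma ai2: "x\<oplus>(x\<oplus>y) = x\<oplus>y" by (simp only: aa[symmetric] ai)
lemma mi2: "x\<odot>(x\<odot>y) = x\<odot>y" by (simp only: ma[symmetric] mi)
lemma mi3: "x\<odot>(y\<odot>(x\<odot>y)) = x\<odot>y" using mi[of "x\<odot>y"] by (simp only: ma)
lemma mi4: "x\<odot>(y\<odot>(x\<odot>(y\<odot>z))) = x\<odot>(y\<odot>z)"
  using mi[of "x\<odot>y"] by (simp only: ma[symmetric])
lemma ai3: "x\<oplus>(y\<oplus>(x\<oplus>y)) = x\<oplus>y" using ai[of "x\<oplus>y"] by (simp only: aa)

lemmas S = aa ai ma mi ai2 mi2 mi3 mi4 ai3

lemma sig1: "(x\<odot>y, y\<odot>x) \<in> sigma_rel add mul"
  unfolding sigma_rel_def by (simp add: S)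

lemma sig2: "(x\<odot>y, x\<odot>y\<odot>x) \<in> sigma_rel add mul"
  unfolding sigma_rel_def by (simp add: S)

lemma sig3: "(x, x \<oplus> x\<odot>y\<odot>x) \<in> sigma_rel add mul"
proof -
  let ?c = "x \<oplus> x\<odot>y\<odot>x"
  have e1: "x\<odot>?c\<odot>x = ?c" by (simp add: dl dr S)
  have e2: "?c\<odot>x = ?c" by (simp add: dr S)
  have e3: "?c\<odot>x\<odot>?c = ?c" by (simp add: e2 mi)
  have e4: "?c \<oplus> x \<oplus> ?c = ?c" by (simp add: S)
  show ?thesis unfolding sigma_rel_def using e1 e3 e4 ai by (simp only: mem_Collect_eq case_prod_conv)
qed

lemma sig4: "(x, x\<odot>y\<odot>x \<oplus> x) \<in> sigma_rel add mul"
proof -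
  let ?c = "x\<odot>y\<odot>x \<oplus> x"
  have e1: "x\<odot>?c\<odot>x = ?c" by (simp add: dl dr S)
  have e2: "?c\<odot>x = ?c" by (simp add: dr S)
  have e3: "?c\<odot>x\<odot>?c = ?c" by (simp add: e2 mi)
  have e4: "?c \<oplus> x \<oplus> ?c = ?c" by (simp add: S)
  show ?thesis unfolding sigma_rel_def using e1 e3 e4 ai by (simp only: mem_Collect_eq case_prod_conv)
qed

lemma key:
  assumes C: "is_congruence add mul T" and Sg: "sigma_rel add mul \<subseteq> T"
  shows "(x\<odot>y, y\<odot>x) \<in> T" "(x \<oplus> x\<odot>y, x) \<in> T" "(x\<oplus>y, y\<oplus>x) \<in> T"
proof -
  have mc: "\<And>x y. (x\<odot>y, y\<odot>x) \<in> T" using sig1 Sg by blast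
  have ab1: "\<And>x y. (x \<oplus> x\<odot>y, x) \<in> T"
  proof -
    fix x y
    have "(x \<oplus> x\<odot>y, x \<oplus> x\<odot>y\<odot>x) \<in> T"
      using congA[OF C congR[OF C] subsetD[OF Sg sig2]] by simp
    moreover have "(x \<oplus> x\<odot>y\<odot>x, x) \<in> T" using congS[OF C] sig3 Sg by blast
    ultimately show "(x \<oplus> x\<odot>y, x) \<in> T" using congT[OF C] by blast
  qed
  have ab2: "\<And>x y. (x\<odot>y \<oplus> x, x) \<in> T"
  proof -
    fix x y
    have "(x\<odot>y \<oplus> x, x\<odot>y\<odot>x \<oplus> x) \<in> T"
      using congA[OF C subsetD[OF Sg sig2] congR[OF C]] by simp
    moreover have "(x\<odot>y\<odot>x \<oplus> x, x) \<in> T" using congS[OF C] sig4 Sg by blast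
    ultimately show "(x\<odot>y \<oplus> x, x) \<in> T" using congT[OF C] by blast
  qed
  have p1: "(x\<oplus>y)\<odot>(y\<oplus>x) = (x\<odot>y \<oplus> x) \<oplus> (y \<oplus> y\<odot>x)" by (simp only: dr, simp only: dl mi aa)
  have p2: "(y\<oplus>x)\<odot>(x\<oplus>y) = (y\<odot>x \<oplus> y) \<oplus> (x \<oplus> x\<odot>y)" by (simp only: dr, simp only: dl mi aa)
  have q1: "((x\<oplus>y)\<odot>(y\<oplus>x), x\<oplus>y) \<in> T" unfolding p1 by (rule congA[OF C ab2 ab1])
  have q2: "((y\<oplus>x)\<odot>(x\<oplus>y), y\<oplus>x) \<in> T" unfolding p2 by (rule congA[OF C ab2 ab1])
  show "(x\<oplus>y, y\<oplus>x) \<in> T"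
    by (meson congS congT[OF C] C q1 q2 mc)
  show "(x\<odot>y, y\<odot>x) \<in> T" by (rule mc)
  show "(x \<oplus> x\<odot>y, x) \<in> T" by (rule ab1)
qed

lemma minimal:
  assumes D: "dl_congruence add mul \<rho>"
  shows "sigma_rel add mul \<subseteq> \<rho>"
proof
  fix p assume "p \<in> sigma_rel add mul"
  then obtain a b where p: "p = (a,b)" and
    h1: "a\<odot>b\<odot>a = a\<odot>b\<odot>a \<oplus> a \<oplus> a\<odot>b\<odot>a" and
    h2: "b\<odot>a\<odot>b = b\<odot>a\<odot>b \<oplus> b \<oplus> b\<odot>a\<odot>b"
    unfolding sigma_rel_def by blast
  have C: "is_congruence add mul \<rho>" using D unfolding dl_congruence_def by blast
  have ac: "\<And>x y. (x\<oplus>y, y\<oplus>x) \<in> \<rho>" and mc: "\<And>x y. (x\<odot>y, y\<odot>x) \<in> \<rho>"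
    and ab: "\<And>x y. (x \<oplus> x\<odot>y, x) \<in> \<rho>" using D unfolding dl_congruence_def by blast+
  have gen: "(x, x\<odot>y) \<in> \<rho>" if h: "x\<odot>y\<odot>x = x\<odot>y\<odot>x \<oplus> x \<oplus> x\<odot>y\<odot>x" for x y
  proof -
    have r1: "(x\<odot>y\<odot>x, x\<odot>y) \<in> \<rho>" using mc[of "x\<odot>y" x] by (simp add: S)
    have r2: "(x\<odot>y\<odot>x \<oplus> x \<oplus> x\<odot>y\<odot>x, x\<odot>y \<oplus> x \<oplus> x\<odot>y) \<in> \<rho>"
      by (intro congA[OF C] r1 congR[OF C])
    have r3: "(x\<odot>y \<oplus> x, x) \<in> \<rho>" using congT[OF C ac ab] .
    have r4: "(x\<odot>y \<oplus> x \<oplus> x\<odot>y, x \<oplus> x\<odot>y) \<in> \<rho>" by (intro congA[OF C] r3 congR[OF C])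
    have "(x\<odot>y \<oplus> x \<oplus> x\<odot>y, x) \<in> \<rho>" using congT[OF C r4 ab] .
    hence "(x\<odot>y\<odot>x, x) \<in> \<rho>" using congT[OF C r2[folded h]] by blast
    thus ?thesis using congT[OF C congS[OF C] r1] by blast
  qed
  have 1: "(a, a\<odot>b) \<in> \<rho>" using gen[OF h1] .
  have 2: "(b, b\<odot>a) \<in> \<rho>" using gen[OF h2] .
  have 3: "(a, b\<odot>a) \<in> \<rho>" by (rule congT[OF C 1 mc])
  show "p \<in> \<rho>" unfolding p by (rule congT[OF C 3 congS[OF C 2]])
qed

end

theorem lemma2p1:
  fixes add mul :: "'a \<Rightarrow> 'a \<Rightarrow> 'a"
  assumes "idem_semiring add mul"
  shows "dl_congruence add mul (cong_generated add mul (sigma_rel add mul)) \<and>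
         (\<forall>\<rho>. dl_congruence add mul \<rho> \<longrightarrow> cong_generated add mul (sigma_rel add mul) \<subseteq> \<rho>)"
proof -
  interpret isr add mul using assms by unfold_locales
  have C: "is_congruence add mul (cong_generated add mul (sigma_rel add mul))" by (rule cg_cong)
  have "dl_congruence add mul (cong_generated add mul (sigma_rel add mul))"
    unfolding dl_congruence_def using C key[OF C cg_sub] by blast
  moreover have "\<forall>\<rho>. dl_congruence add mul \<rho> \<longrightarrow> cong_generated add mul (sigma_rel add mul) \<subseteq> \<rho>"
  proof (intro allI impI)
    fix \<rho> assume d: "dl_congruence add mul \<rho>"
    show "cong_generated add mul (sigma_rel add mul) \<subseteq> \<rho>"
      by (rule cg_least[OF _ minimal[OF d]]) (use d in \<open>simp add: dl_congruence_def\<close>)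
  qed
  ultimately show ?thesis by blast
qed

end
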